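(* For every irrational real $\alpha$ one has $\mathfrak k^*(\alpha)\ge\mathfrak k(\alpha)\ge2\lambda(\alpha)$, and if $\alpha$ is equivalent to $\sqrt2$ then $\mathfrak k^*(\alpha)=\mathfrak k(\alpha)=2\lambda(\alpha)$.
   Context: For irrational real $\alpha$ with continued fraction $\alpha=[a_0;a_1,a_2,\dots]$ and convergents $p_n/q_n$ ($n\ge0$), define for real $t\ge1$: $\psi_\alpha(t)=\min_{1\le q\le t,\,q\in\mathbb Z}\|q\alpha\|$ (where $\|x\|$ is the distance to the nearest integer), $\psi^{[2]}_\alpha(t)=\min\{|q\alpha-p|: p,q\in\mathbb Z,\ 1\le q\le t,\ (p,q)\ne(p_n,q_n)\ \forall n\ge0\}$, and $\psi^{[2]*}_\alpha(t)=\min\{|q\alpha-p|: p,q\in\mathbb Z,\ 1\le q\le t,\ p/q\ne p_n/q_n\ \forall n\ge0\}$. Set $\lambda(\alpha)=\liminf_{t\to\infty}t\psi_\alpha(t)$, $\mathfrak k(\alpha)=\liminf_{t\to\infty}t\psi^{[2]}_\alpha(t)$, $\mathfrak k^*(\alpha)=\liminf_{t\to\infty}t\psi^{[2]*}_\alpha(t)$. Two irrationals are equivalent if they are related by a Möbius map $x\mapsto(ax+b)/(cx+d)$ with integer entries and $ad-bc=\pm1$. *)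

theory Defs
  imports Complex_Main "HOL-Library.Extended_Real" "HOL-Library.Liminf_Limsup"
begin

fun cf_rem :: "real \<Rightarrow> nat \<Rightarrow> real" where
  "cf_rem x 0 = x"
| "cf_rem x (Suc n) = 1 / (cf_rem x n - of_int \<lfloor>cf_rem x n\<rfloor>)"

definition cf_a :: "real \<Rightarrow> nat \<Rightarrow> int" where
  "cf_a x n = \<lfloor>cf_rem x n\<rfloor>"

fun cf_p :: "real \<Rightarrow> nat \<Rightarrow> int" where
  "cf_p x 0 = cf_a x 0"
| "cf_p x (Suc 0) = cf_a x 1 * cf_a x 0 + 1"
| "cf_p x (Suc (Suc n)) = cf_a x (Suc (Suc n)) * cf_p x (Suc n) + cf_p x n"

fun cf_q :: "real \<Rightarrow> nat \<Rightarrow> int" where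
  "cf_q x 0 = 1"
| "cf_q x (Suc 0) = cf_a x 1"
| "cf_q x (Suc (Suc n)) = cf_a x (Suc (Suc n)) * cf_q x (Suc n) + cf_q x n"

definition dist_int :: "real \<Rightarrow> real" where
  "dist_int x = \<bar>x - of_int (round x)\<bar>"

definition psi :: "real \<Rightarrow> real \<Rightarrow> real" where
  "psi \<alpha> t = Inf {dist_int (of_int q * \<alpha>) | q::int. 1 \<le> q \<and> real_of_int q \<le> t}"

definition psi2 :: "real \<Rightarrow> real \<Rightarrow> real" where
  "psi2 \<alpha> t = Inf {\<bar>of_int q * \<alpha> - of_int p\<bar> | p q::int.
      1 \<le> q \<and> real_of_int q \<le> t \<and> (\<forall>n. (p, q) \<noteq> (cf_p \<alpha> n, cf_q \<alpha> n))}"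

definition psi2star :: "real \<Rightarrow> real \<Rightarrow> real" where
  "psi2star \<alpha> t = Inf {\<bar>of_int q * \<alpha> - of_int p\<bar> | p q::int.
      1 \<le> q \<and> real_of_int q \<le> t \<and>
      (\<forall>n. real_of_int p / real_of_int q \<noteq> real_of_int (cf_p \<alpha> n) / real_of_int (cf_q \<alpha> n))}"

definition lagrange :: "real \<Rightarrow> ereal" where
  "lagrange \<alpha> = Liminf at_top (\<lambda>t::real. ereal (t * psi \<alpha> t))"

definition kfrak :: "real \<Rightarrow> ereal" where
  "kfrak \<alpha> = Liminf at_top (\<lambda>t::real. ereal (t * psi2 \<alpha> t))"

definition kfrak_star :: "real \<Rightarrow> ereal" where
  "kfrak_star \<alpha> = Liminf at_top (\<lambda>t::real. ereal (t * psi2star \<alpha> t))"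

definition moebius_equiv :: "real \<Rightarrow> real \<Rightarrow> bool" where
  "moebius_equiv x y \<longleftrightarrow> (\<exists>a b c d :: int. \<bar>a * d - b * c\<bar> = 1 \<and>
      x = (of_int a * y + of_int b) / (of_int c * y + of_int d))"

end

theory Submission
  imports Defs
begin


definition PP :: "real \<Rightarrow> nat \<Rightarrow> int" where
  "PP x k = (case k of 0 \<Rightarrow> 1 | Suc n \<Rightarrow> cf_p x n)"
definition QQ :: "real \<Rightarrow> nat \<Rightarrow> int" where
  "QQ x k = (case k of 0 \<Rightarrow> 0 | Suc n \<Rightarrow> cf_q x n)"
definition dl :: "real \<Rightarrow> nat \<Rightarrow> real" where
  "dl x k = of_int (QQ x k) * x - of_int (PP x k)"

lemma PP_rec: "PP x (Suc (Suc k)) = cf_a x (Suc k) * PP x (Suc k) + PP x k"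
  by (cases k) (auto simp: PP_def)
lemma QQ_rec: "QQ x (Suc (Suc k)) = cf_a x (Suc k) * QQ x (Suc k) + QQ x k"
  by (cases k) (auto simp: QQ_def)
lemma PP_01: "PP x 0 = 1" "PP x (Suc 0) = cf_a x 0"
  by (auto simp: PP_def)
lemma QQ_01: "QQ x 0 = 0" "QQ x (Suc 0) = 1"
  by (auto simp: QQ_def)

lemma dl_rec: "dl x (Suc (Suc k)) = of_int (cf_a x (Suc k)) * dl x (Suc k) + dl x k"
  by (simp add: dl_def PP_rec QQ_rec algebra_simps)

locale cf =
  fixes \<alpha> :: real
  assumes irr: "\<alpha> \<notin> \<rat>"
begin

abbreviation "r \<equiv> cf_rem \<alpha>"

lemma r_Suc: "r (Suc n) = 1 / (r n - of_int \<lfloor>r n\<rfloor>)" by simp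

declare cf_rem.simps(2)[simp del]

lemma r_irr: "r n \<notin> \<rat>"
proof (induction n)
  case 0 then show ?case using irr by simp
next
  case (Suc n)
  show ?case
  proof
    assume "r (Suc n) \<in> \<rat>"
    then have "1 / (r n - of_int \<lfloor>r n\<rfloor>) \<in> \<rat>" by (simp add: r_Suc)
    then have "r n - of_int \<lfloor>r n\<rfloor> \<in> \<rat>"
      by (metis Rats_inverse inverse_eq_divide inverse_inverse_eq)
    then have "r n - of_int \<lfloor>r n\<rfloor> + of_int \<lfloor>r n\<rfloor> \<in> \<rat>"
      by (intro Rats_add) auto
    with Suc show False by simp
  qed
qed

lemma frac_pos: "0 < r n - of_int \<lfloor>r n\<rfloor>"
proof -
  have "r n \<noteq> of_int \<lfloor>r n\<rfloor>" using r_irr[of n] by (metis Rats_of_int)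
  then show ?thesis using of_int_floor_le[of "r n"] by linarith
qed

lemma frac_lt1: "r n - of_int \<lfloor>r n\<rfloor> < 1"
  by linarith

lemma r_gt1: "r (Suc n) > 1"
  using frac_pos[of n] frac_lt1[of n] by (simp add: r_Suc field_simps)

lemma a_ge1: "cf_a \<alpha> (Suc n) \<ge> 1"
  using r_gt1[of n] unfolding cf_a_def by linarith

lemma r_SS: "r (Suc (Suc k)) = 1 / (r (Suc k) - of_int (cf_a \<alpha> (Suc k)))"
  by (simp add: cf_a_def r_Suc)

lemma dl_step: "dl \<alpha> (Suc k) = - dl \<alpha> k / r (Suc k)"
proof (induction k)
  case 0
  have "r (Suc 0) = 1 / (\<alpha> - of_int \<lfloor>\<alpha>\<rfloor>)" by (simp add: r_Suc)
  moreover have "\<alpha> - of_int \<lfloor>\<alpha>\<rfloor> > 0" using frac_pos[of 0] by simp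
  ultimately show ?case by (simp add: dl_def PP_01 QQ_01 cf_a_def)
next
  case (Suc k)
  have rp: "r (Suc k) > 0" using r_gt1[of k] by simp
  have fp: "r (Suc k) - of_int (cf_a \<alpha> (Suc k)) > 0" using frac_pos[of "Suc k"] by (simp add: cf_a_def)
  have e: "dl \<alpha> k = - r (Suc k) * dl \<alpha> (Suc k)" using Suc rp by (simp add: field_simps)
  have "dl \<alpha> (Suc (Suc k)) = (of_int (cf_a \<alpha> (Suc k)) - r (Suc k)) * dl \<alpha> (Suc k)"
    by (simp add: dl_rec e algebra_simps)
  also have "\<dots> = - dl \<alpha> (Suc k) / r (Suc (Suc k))" using fp by (simp add: r_SS field_simps)
  finally show ?case .
qed

lemma dl_0: "dl \<alpha> 0 = -1" by (simp add: dl_def PP_01 QQ_01)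

lemma abs_dl_step: "\<bar>dl \<alpha> (Suc k)\<bar> = \<bar>dl \<alpha> k\<bar> / r (Suc k)"
proof -
  have "r (Suc k) > 0" using r_gt1[of k] by simp
  then show ?thesis unfolding dl_step by (simp add: abs_divide)
qed

lemma dl_pos: "\<bar>dl \<alpha> k\<bar> > 0"
proof (induction k)
  case (Suc k)
  have "r (Suc k) > 0" using r_gt1[of k] by simp
  then show ?case using Suc by (simp add: abs_dl_step)
qed (simp add: dl_0)

lemma dl_decr: "\<bar>dl \<alpha> (Suc k)\<bar> < \<bar>dl \<alpha> k\<bar>"
  using dl_pos[of k] r_gt1[of k] by (simp add: abs_dl_step divide_less_eq)

lemma dl_mono: "m \<le> n \<Longrightarrow> \<bar>dl \<alpha> n\<bar> \<le> \<bar>dl \<alpha> m\<bar>"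
proof (induction n rule: dec_induct)
  case (step n) then show ?case using dl_decr[of n] by linarith
qed simp

lemma dl_le1: "\<bar>dl \<alpha> k\<bar> \<le> 1"
  using dl_mono[of 0 k] by (simp add: dl_0)

lemma QQ_nonneg: "QQ \<alpha> k \<ge> 0 \<and> QQ \<alpha> (Suc k) \<ge> 1"
proof (induction k)
  case 0 then show ?case by (simp add: QQ_01)
next
  case (Suc k)
  have "QQ \<alpha> (Suc (Suc k)) = cf_a \<alpha> (Suc k) * QQ \<alpha> (Suc k) + QQ \<alpha> k" by (rule QQ_rec)
  moreover have "cf_a \<alpha> (Suc k) * QQ \<alpha> (Suc k) \<ge> 1" using a_ge1[of k] Suc
    using mult_mono[of 1 "cf_a \<alpha> (Suc k)" 1 "QQ \<alpha> (Suc k)"] by simp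
  ultimately show ?case using Suc by linarith
qed

lemma QQ_ge0: "QQ \<alpha> k \<ge> 0" using QQ_nonneg by blast
lemma QQ_ge1: "k \<ge> 1 \<Longrightarrow> QQ \<alpha> k \<ge> 1" using QQ_nonneg[of "k - 1"] by simp

lemma QQ_SS: "QQ \<alpha> (Suc (Suc k)) \<ge> QQ \<alpha> (Suc k) + QQ \<alpha> k"
proof -
  have "cf_a \<alpha> (Suc k) * QQ \<alpha> (Suc k) \<ge> 1 * QQ \<alpha> (Suc k)"
    using a_ge1[of k] QQ_ge0[of "Suc k"] by (intro mult_right_mono) auto
  then show ?thesis by (simp add: QQ_rec)
qed

lemma QQ_incr: "QQ \<alpha> k \<le> QQ \<alpha> (Suc k)"
  using QQ_SS[of "k - 1"] QQ_ge0[of "k - 1"] by (cases k) (auto simp: QQ_01)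

lemma QQ_mono: "m \<le> n \<Longrightarrow> QQ \<alpha> m \<le> QQ \<alpha> n"
proof (induction n rule: dec_induct)
  case (step n) then show ?case using QQ_incr[of n] by linarith
qed simp

lemma QQ_big: "QQ \<alpha> (Suc k) \<ge> int k"
proof (induction k rule: less_induct)
  case (less k)
  show ?case
  proof (cases k)
    case 0 then show ?thesis using QQ_ge0 by simp
  next
    case (Suc m)
    show ?thesis
    proof (cases m)
      case 0 then show ?thesis using Suc QQ_ge1[of "Suc (Suc 0)"] by simp
    next
      case (Suc j)
      have "QQ \<alpha> (Suc k) \<ge> QQ \<alpha> k + QQ \<alpha> m" using QQ_SS[of m] \<open>k = Suc m\<close> by simp
      moreover have "QQ \<alpha> k \<ge> int m" using less \<open>k = Suc m\<close> by simp
      moreover have "QQ \<alpha> m \<ge> 1" using QQ_ge1 Suc by simp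
      ultimately show ?thesis using \<open>k = Suc m\<close> by linarith
    qed
  qed
qed

lemma det_int: "PP x (Suc k) * QQ x k - PP x k * QQ x (Suc k) = (-1) ^ Suc k"
proof (induction k)
  case 0 then show ?case by (simp add: PP_01 QQ_01)
next
  case (Suc k)
  then show ?case by (simp add: PP_rec QQ_rec algebra_simps)
qed

lemma key_id: "of_int (QQ \<alpha> (Suc k)) * \<bar>dl \<alpha> k\<bar> + of_int (QQ \<alpha> k) * \<bar>dl \<alpha> (Suc k)\<bar> = 1"
proof -
  have rp: "r (Suc k) > 0" using r_gt1[of k] by simp
  have "of_int (QQ \<alpha> (Suc k)) * dl \<alpha> k - of_int (QQ \<alpha> k) * dl \<alpha> (Suc k)
        = real_of_int (PP \<alpha> (Suc k) * QQ \<alpha> k - PP \<alpha> k * QQ \<alpha> (Suc k))"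
    by (simp add: dl_def algebra_simps)
  also have "\<dots> = (-1) ^ Suc k" by (simp only: det_int) simp
  finally have e: "dl \<alpha> k * (of_int (QQ \<alpha> (Suc k)) + of_int (QQ \<alpha> k) / r (Suc k)) = (-1) ^ Suc k"
    by (simp add: dl_step field_simps)
  have "\<bar>dl \<alpha> k\<bar> * (of_int (QQ \<alpha> (Suc k)) + of_int (QQ \<alpha> k) / r (Suc k)) = 1"
  proof -
    have "\<bar>dl \<alpha> k * (of_int (QQ \<alpha> (Suc k)) + of_int (QQ \<alpha> k) / r (Suc k))\<bar> = 1"
      by (simp add: e)
    moreover have "of_int (QQ \<alpha> (Suc k)) + of_int (QQ \<alpha> k) / r (Suc k) \<ge> 0"
      using QQ_ge0[of k] QQ_ge0[of "Suc k"] rp by simp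
    ultimately show ?thesis by (simp add: abs_mult)
  qed
  then show ?thesis using rp by (simp add: abs_dl_step field_simps)
qed


definition u :: "nat \<Rightarrow> real" where "u k = of_int (QQ \<alpha> k) * \<bar>dl \<alpha> k\<bar>"

lemma u_ge0: "u k \<ge> 0" using QQ_ge0[of k] by (simp add: u_def)

lemma decomp:
  fixes p q :: int
  shows "\<exists>x y. p = x * PP \<alpha> k + y * PP \<alpha> (Suc k) \<and> q = x * QQ \<alpha> k + y * QQ \<alpha> (Suc k)"
proof -
  define d :: int where "d = (-1) ^ Suc k"
  have dd: "d * d = 1" by (simp add: d_def power_mult_distrib[symmetric] flip: power_add)
  have det: "PP \<alpha> (Suc k) * QQ \<alpha> k - PP \<alpha> k * QQ \<alpha> (Suc k) = d" using det_int d_def by simp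
  define x where "x = d * (q * PP \<alpha> (Suc k) - p * QQ \<alpha> (Suc k))"
  define y where "y = d * (p * QQ \<alpha> k - q * PP \<alpha> k)"
  have "x * PP \<alpha> k + y * PP \<alpha> (Suc k) = d * p * (PP \<alpha> (Suc k) * QQ \<alpha> k - PP \<alpha> k * QQ \<alpha> (Suc k))"
    by (simp add: x_def y_def algebra_simps)
  also have "\<dots> = p" using det dd by (simp add: algebra_simps)
  finally have 1: "p = x * PP \<alpha> k + y * PP \<alpha> (Suc k)" by simp
  have "x * QQ \<alpha> k + y * QQ \<alpha> (Suc k) = d * q * (PP \<alpha> (Suc k) * QQ \<alpha> k - PP \<alpha> k * QQ \<alpha> (Suc k))"
    by (simp add: x_def y_def algebra_simps)
  also have "\<dots> = q" using det dd by (simp add: algebra_simps)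
  finally have 2: "q = x * QQ \<alpha> k + y * QQ \<alpha> (Suc k)" by simp
  from 1 2 show ?thesis by blast
qed


lemma r_pos: "k \<ge> 1 \<Longrightarrow> r k > 1"
  using r_gt1[of "k - 1"] by simp

lemma ident_poly: fixes a j Q0 Q1 A0 D0 :: real shows
  "a * ((j * Q1 + Q0) * (A0 - j * D0)) = (a - j) * (Q0 * A0) + j * ((a * Q1 + Q0) * (A0 - a * D0))
     + a * ((Q1 * D0) * (j * (a - j)))"
  by (simp add: algebra_simps)

lemma main_cases:
  fixes p q :: int
  assumes k: "k \<ge> 1" and q1: "QQ \<alpha> k \<le> q" and q2: "q < QQ \<alpha> (Suc k)"
  shows "\<bar>of_int q * \<alpha> - of_int p\<bar> \<ge> \<bar>dl \<alpha> k\<bar> \<and>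
    ((p, q) \<noteq> (PP \<alpha> k, QQ \<alpha> k) \<longrightarrow> (p, q) \<noteq> (PP \<alpha> (k - 1), QQ \<alpha> (k - 1)) \<longrightarrow>
      of_int q * \<bar>of_int q * \<alpha> - of_int p\<bar> \<ge> 1 \<or>
      of_int q * \<bar>of_int q * \<alpha> - of_int p\<bar> \<ge> 2 * min (u (k - 1)) (min (u k) (u (Suc k))))"
proof -
  obtain x y where pe: "p = x * PP \<alpha> k + y * PP \<alpha> (Suc k)" and qe: "q = x * QQ \<alpha> k + y * QQ \<alpha> (Suc k)"
    using decomp by blast
  define E where "E = \<bar>of_int q * \<alpha> - of_int p\<bar>"
  define R where "R = r (Suc k)"
  define D0 where "D0 = \<bar>dl \<alpha> k\<bar>"
  have R1: "R > 1" using r_gt1 R_def by simp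
  have D0p: "D0 > 0" using dl_pos D0_def by simp
  have Qk1: "QQ \<alpha> k \<ge> 1" using QQ_ge1 k by simp
  have QQSk: "QQ \<alpha> k \<le> QQ \<alpha> (Suc k)" by (rule QQ_incr)
  have key: "of_int (QQ \<alpha> (Suc k)) * D0 + of_int (QQ \<alpha> k) * (D0 / R) = 1"
    using key_id[of k] by (simp add: D0_def R_def abs_dl_step)
  have "of_int q * \<alpha> - of_int p = of_int x * dl \<alpha> k + of_int y * dl \<alpha> (Suc k)"
    by (simp add: pe qe dl_def algebra_simps)
  also have "\<dots> = dl \<alpha> k * (of_int x - of_int y / R)"
    by (simp add: dl_step R_def algebra_simps)
  finally have Eeq: "E = D0 * \<bar>of_int x - of_int y / R\<bar>" by (simp add: E_def D0_def abs_mult)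
  have qpos: "q \<ge> 1" using q1 Qk1 by simp
  have E0: "E \<ge> 0" by (simp add: E_def)
  have qE: "of_int q * E \<ge> of_int (QQ \<alpha> k) * E" using q1 E0 by (intro mult_right_mono) auto
  consider (z) "y = 0" | (pos) "y \<ge> 1" | (neg) "y \<le> -1" by linarith
  then have "E \<ge> D0 \<and> ((p, q) \<noteq> (PP \<alpha> k, QQ \<alpha> k) \<longrightarrow> (p, q) \<noteq> (PP \<alpha> (k - 1), QQ \<alpha> (k - 1)) \<longrightarrow>
      of_int q * E \<ge> 1 \<or> of_int q * E \<ge> 2 * min (u (k - 1)) (min (u k) (u (Suc k))))"
  proof cases
    case z
    have x1: "x \<ge> 1"
    proof (rule ccontr)
      assume "\<not> x \<ge> 1"
      then have "x * QQ \<alpha> k \<le> 0" using Qk1 by (intro mult_nonpos_nonneg) auto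
      then show False using qe z qpos by simp
    qed
    have Ex: "E = of_int x * D0" using Eeq z x1 by simp
    show ?thesis
    proof (intro conjI impI)
      show "E \<ge> D0" using Ex x1 D0p by simp
      assume "(p, q) \<noteq> (PP \<alpha> k, QQ \<alpha> k)"
      then have "x \<noteq> 1" using pe qe z by auto
      then have x2: "x \<ge> 2" using x1 by simp
      have "of_int q * E = of_int x * of_int x * u k" using qe z Ex by (simp add: u_def D0_def)
      also have "\<dots> \<ge> 4 * u k"
      proof -
        have "(of_int x * of_int x :: real) \<ge> 2 * 2" using x2
          by (intro mult_mono) auto
        then show ?thesis using u_ge0[of k] by (intro mult_right_mono[of 4 _ "u k", simplified]) auto
      qed
      finally have "of_int q * E \<ge> 2 * u k" using u_ge0[of k] by simp
      moreover have "min (u (k - 1)) (min (u k) (u (Suc k))) \<le> u k" by simp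
      ultimately show "of_int q * E \<ge> 1 \<or> of_int q * E \<ge> 2 * min (u (k - 1)) (min (u k) (u (Suc k)))"
        by linarith
    qed
  next
    case pos
    have xneg: "x \<le> -1"
    proof (rule ccontr)
      assume "\<not> x \<le> -1"
      then have "x * QQ \<alpha> k \<ge> 0" using Qk1 by simp
      moreover have "y * QQ \<alpha> (Suc k) \<ge> QQ \<alpha> (Suc k)" using pos QQSk Qk1
        using mult_right_mono[of 1 y "QQ \<alpha> (Suc k)"] by simp
      ultimately show False using qe q2 by simp
    qed
    have Ex: "E = (- of_int x) * D0 + of_int y * (D0 / R)"
    proof -
      have "of_int y / R \<ge> 0" using pos R1 by simp
      moreover have "(of_int x :: real) \<le> -1" using xneg by simp
      ultimately have "of_int x - of_int y / R < 0" by linarith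
      then show ?thesis using Eeq by (simp add: algebra_simps)
    qed
    have yD: "of_int y * (D0 / R) \<ge> 0" using pos D0p R1 by simp
    show ?thesis
    proof (intro conjI impI)
      have "(- of_int x) * D0 \<ge> 1 * D0" using xneg D0p by (intro mult_right_mono) auto
      then show "E \<ge> D0" using Ex yD by simp
      assume ne1: "(p, q) \<noteq> (PP \<alpha> k, QQ \<alpha> k)" and ne2: "(p, q) \<noteq> (PP \<alpha> (k - 1), QQ \<alpha> (k - 1))"
      show "of_int q * E \<ge> 1 \<or> of_int q * E \<ge> 2 * min (u (k - 1)) (min (u k) (u (Suc k)))"
      proof (cases "y \<ge> 2")
        case True
        have "(- x) * QQ \<alpha> k \<ge> QQ \<alpha> (Suc k)"
        proof -
          have "(y - 1) * QQ \<alpha> (Suc k) \<ge> 1 * QQ \<alpha> (Suc k)" using True QQSk Qk1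
            by (intro mult_right_mono) auto
          then show ?thesis using qe q2 by (simp add: algebra_simps)
        qed
        then have h1: "(- of_int x) * of_int (QQ \<alpha> k) * D0 \<ge> of_int (QQ \<alpha> (Suc k)) * D0"
          using D0p by (intro mult_right_mono) (auto simp flip: of_int_mult of_int_minus)
        have h2: "of_int y * (D0 / R) * of_int (QQ \<alpha> k) \<ge> 1 * (D0 / R) * of_int (QQ \<alpha> k)"
          using pos D0p R1 Qk1 by (intro mult_right_mono) auto
        have "of_int (QQ \<alpha> k) * E = (- of_int x) * of_int (QQ \<alpha> k) * D0 + of_int y * (D0 / R) * of_int (QQ \<alpha> k)"
          unfolding Ex by (simp add: algebra_simps)
        then have "of_int (QQ \<alpha> k) * E \<ge> 1"
          using h1 h2 key by (simp add: algebra_simps)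
        then show ?thesis using qE by simp
      next
        case False
        then have y1: "y = 1" using pos by simp
        obtain m where km: "k = Suc m" using k by (cases k) auto
        define a where "a = cf_a \<alpha> k"
        define j where "j = a + x"
        have QQr: "QQ \<alpha> (Suc k) = a * QQ \<alpha> k + QQ \<alpha> m" using QQ_rec[of \<alpha> m] km a_def by simp
        have PPr: "PP \<alpha> (Suc k) = a * PP \<alpha> k + PP \<alpha> m" using PP_rec[of \<alpha> m] km a_def by simp
        have dlr: "dl \<alpha> (Suc k) = of_int a * dl \<alpha> k + dl \<alpha> m" using dl_rec[of \<alpha> m] km a_def by simp
        have qj: "q = j * QQ \<alpha> k + QQ \<alpha> m" using qe y1 QQr j_def by (simp add: algebra_simps)
        have pj: "p = j * PP \<alpha> k + PP \<alpha> m" using pe y1 PPr j_def by (simp add: algebra_simps)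
        have Qm: "QQ \<alpha> m \<le> QQ \<alpha> k" using QQ_incr km by simp
        have j0: "j \<ge> 0"
        proof (rule ccontr)
          assume "\<not> j \<ge> 0"
          then have "j * QQ \<alpha> k \<le> - 1 * QQ \<alpha> k" using Qk1 by (intro mult_right_mono) auto
          then show False using qj Qm qpos by simp
        qed
        have jne: "j \<noteq> 0" using ne2 qj pj km by auto
        have j1: "j \<ge> 1" using j0 jne by simp
        have ja: "j \<le> a - 1" using xneg j_def by simp
        define \<rho> where "\<rho> = r k"
        have \<rho>1: "\<rho> > 1" using r_pos k \<rho>_def by simp
        have a_le: "of_int a < \<rho>"
        proof -
          have "of_int a \<le> \<rho>" unfolding a_def cf_a_def \<rho>_def by (rule of_int_floor_le)
          moreover have "of_int a \<noteq> \<rho>"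
          proof
            assume h: "of_int a = \<rho>"
            have "(of_int a :: real) \<in> \<rat>" by (rule Rats_of_int)
            with h show False using r_irr[of k] \<rho>_def by simp
          qed
          ultimately show ?thesis by simp
        qed
        define A0 where "A0 = \<bar>dl \<alpha> m\<bar>"
        have dlk: "dl \<alpha> k = - dl \<alpha> m / \<rho>" unfolding \<rho>_def km by (rule dl_step)
        have A0p: "A0 > 0" unfolding A0_def by (rule dl_pos)
        have D0e: "D0 = A0 / \<rho>" unfolding D0_def A0_def dlk using \<rho>1 by (simp add: abs_divide)
        have "of_int q * \<alpha> - of_int p = of_int j * dl \<alpha> k + dl \<alpha> m"
          by (simp add: qj pj dl_def algebra_simps)
        also have "\<dots> = dl \<alpha> m * (1 - of_int j / \<rho>)" using dlk by (simp add: algebra_simps)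
        finally have EA1: "E = A0 * \<bar>1 - of_int j / \<rho>\<bar>" by (simp add: E_def A0_def abs_mult)
        have "of_int j / \<rho> < 1" using ja a_le \<rho>1 by (simp add: divide_less_eq)
        then have "E = A0 * (1 - of_int j / \<rho>)" unfolding EA1 by simp
        then have EA: "E = A0 - of_int j * D0" using D0e by (simp add: algebra_simps)
        have e1: "dl \<alpha> (Suc k) = dl \<alpha> m * (1 - of_int a / \<rho>)" using dlr dlk by (simp add: algebra_simps)
        have "of_int a / \<rho> < 1" using a_le \<rho>1 by (simp add: divide_less_eq)
        then have "\<bar>dl \<alpha> (Suc k)\<bar> = A0 * (1 - of_int a / \<rho>)" unfolding e1 A0_def by (simp add: abs_mult)
        then have "\<bar>dl \<alpha> (Suc k)\<bar> = A0 - of_int a * D0" using D0e by (simp add: algebra_simps)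
        then have u2: "u (Suc k) = (of_int a * of_int (QQ \<alpha> k) + of_int (QQ \<alpha> m)) * (A0 - of_int a * D0)"
          by (simp add: u_def QQr)
        have u0: "u (k - 1) = of_int (QQ \<alpha> m) * A0" by (simp add: u_def km A0_def)
        have u1: "u k = of_int (QQ \<alpha> k) * D0" by (simp add: u_def D0_def)
        have apos: "a \<ge> 2" using j1 ja by simp
        have apos': "(of_int a :: real) > 0" using apos by simp
        have ident: "of_int a * (of_int q * E) = (of_int a - of_int j) * u (k - 1) + of_int j * u (Suc k)
              + of_int a * (u k * (of_int j * (of_int a - of_int j)))"
          unfolding u0 u1 u2 EA qj of_int_add of_int_mult by (rule ident_poly)
        have jj: "(of_int j * (of_int a - of_int j) :: real) \<ge> 1"
        proof -
          have "j * (a - j) \<ge> 1 * 1" using j1 ja by (intro mult_mono) auto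
          then show ?thesis by (simp flip: of_int_mult of_int_diff)
        qed
        define mn where "mn = min (u (k - 1)) (u (Suc k))"
        have "u k * (of_int j * (of_int a - of_int j)) \<ge> u k * 1" using u_ge0[of k] jj by (intro mult_left_mono) auto
        then have "of_int a * (u k * (of_int j * (of_int a - of_int j))) \<ge> of_int a * u k"
          using apos' by (intro mult_left_mono) auto
        moreover have "(of_int a - of_int j) * u (k - 1) \<ge> (of_int a - of_int j) * mn"
          using ja by (intro mult_left_mono) (auto simp: mn_def)
        moreover have "of_int j * u (Suc k) \<ge> of_int j * mn" using j1 by (intro mult_left_mono) (auto simp: mn_def)
        ultimately have "of_int a * (of_int q * E) \<ge> of_int a * (mn + u k)"
          using ident by (simp add: algebra_simps)
        then have "of_int q * E \<ge> mn + u k" using apos' by simp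
        then have "of_int q * E \<ge> min (u (k - 1)) (u (Suc k)) + u k" by (simp add: mn_def)
        moreover have "min (u (k - 1)) (min (u k) (u (Suc k))) \<le> u k"
          "min (u (k - 1)) (min (u k) (u (Suc k))) \<le> min (u (k - 1)) (u (Suc k))" by auto
        ultimately show ?thesis by linarith
      qed
    qed
  next
    case neg
    have xpos: "x \<ge> 1"
    proof (rule ccontr)
      assume "\<not> x \<ge> 1"
      then have "x * QQ \<alpha> k \<le> 0" using Qk1 by (intro mult_nonpos_nonneg) auto
      moreover have "y * QQ \<alpha> (Suc k) \<le> 0" using neg QQSk Qk1 by (intro mult_nonpos_nonneg) auto
      ultimately show False using qe qpos by simp
    qed
    have Ex: "E = of_int x * D0 + (- of_int y) * (D0 / R)"
    proof -
      have "of_int x - of_int y / R > 0" using xpos neg R1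
      proof -
        have "of_int y / R \<le> 0" using neg R1 by (simp add: divide_nonpos_pos)
        moreover have "(of_int x :: real) \<ge> 1" using xpos by simp
        ultimately show ?thesis by linarith
      qed
      then show ?thesis using Eeq by (simp add: algebra_simps)
    qed
    have yD: "(- of_int y) * (D0 / R) \<ge> 1 * (D0 / R)" using neg D0p R1 by (intro mult_right_mono) auto
    show ?thesis
    proof (intro conjI impI)
      have "of_int x * D0 \<ge> 1 * D0" using xpos D0p by (intro mult_right_mono) auto
      moreover have "D0 / R > 0" using D0p R1 by simp
      ultimately show "E \<ge> D0" using Ex yD by linarith
      have "x * QQ \<alpha> k \<ge> QQ \<alpha> (Suc k)"
      proof -
        have "(- y) * QQ \<alpha> (Suc k) \<ge> 1 * QQ \<alpha> (Suc k)" using neg QQSk Qk1 by (intro mult_right_mono) auto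
        then show ?thesis using qe qpos by (simp add: algebra_simps)
      qed
      then have h1: "of_int x * of_int (QQ \<alpha> k) * D0 \<ge> of_int (QQ \<alpha> (Suc k)) * D0"
        using D0p by (intro mult_right_mono) (auto simp flip: of_int_mult)
      have h2: "(- of_int y) * (D0 / R) * of_int (QQ \<alpha> k) \<ge> 1 * (D0 / R) * of_int (QQ \<alpha> k)"
        by (rule mult_right_mono[OF yD]) (use Qk1 in simp)
      have "of_int (QQ \<alpha> k) * E = of_int x * of_int (QQ \<alpha> k) * D0 + (- of_int y) * (D0 / R) * of_int (QQ \<alpha> k)"
        unfolding Ex by (simp add: algebra_simps)
      then have "of_int (QQ \<alpha> k) * E \<ge> 1" using h1 h2 key by (simp add: algebra_simps)
      then show "of_int q * E \<ge> 1 \<or> of_int q * E \<ge> 2 * min (u (k - 1)) (min (u k) (u (Suc k)))"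
        using qE by simp
    qed
  qed
  then show ?thesis by (simp add: E_def D0_def)
qed

end


context cf begin

lemma locate:
  fixes q :: int
  assumes "q \<ge> 1"
  shows "\<exists>k\<ge>1. QQ \<alpha> k \<le> q \<and> q < QQ \<alpha> (Suc k) \<and> (\<forall>m. q < QQ \<alpha> m \<longrightarrow> Suc k \<le> m)"
proof -
  define P where "P = (\<lambda>n. q < QQ \<alpha> n)"
  have ex: "P (Suc (nat q + 1))" using QQ_big[of "nat q + 1"] assms by (simp add: P_def)
  define n0 where "n0 = (LEAST n. P n)"
  have Pn0: "P n0" using ex unfolding n0_def by (rule LeastI)
  have lst: "\<And>m. P m \<Longrightarrow> n0 \<le> m" unfolding n0_def by (rule Least_le)
  have "n0 \<noteq> 0"
  proof
    assume "n0 = 0" then show False using Pn0 assms by (simp add: P_def QQ_01)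
  qed
  moreover have "n0 \<noteq> 1"
  proof
    assume "n0 = 1" then show False using Pn0 assms by (simp add: P_def QQ_01)
  qed
  ultimately obtain k where k: "n0 = Suc k" "k \<ge> 1" by (cases n0) auto
  have "\<not> P k" using lst k by (metis Suc_n_not_le_n)
  then show ?thesis using Pn0 k lst by (intro exI[of _ k]) (auto simp: P_def)
qed

lemma best_approx:
  fixes p q :: int
  assumes "q \<ge> 1" "q < QQ \<alpha> m"
  shows "\<bar>of_int q * \<alpha> - of_int p\<bar> \<ge> \<bar>dl \<alpha> (m - 1)\<bar>"
proof -
  obtain k where k: "k \<ge> 1" "QQ \<alpha> k \<le> q" "q < QQ \<alpha> (Suc k)" "Suc k \<le> m"
    using locate[OF assms(1)] assms(2) by blast
  have "\<bar>of_int q * \<alpha> - of_int p\<bar> \<ge> \<bar>dl \<alpha> k\<bar>" using main_cases[OF k(1-3)] by blast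
  moreover have "\<bar>dl \<alpha> (m - 1)\<bar> \<le> \<bar>dl \<alpha> k\<bar>" using k(4) by (intro dl_mono) simp
  ultimately show ?thesis by simp
qed

lemma dist_int_le: "dist_int x \<le> \<bar>x - of_int m\<bar>"
proof (cases "m = round x")
  case True then show ?thesis by (simp add: dist_int_def)
next
  case False
  then have "\<bar>m - round x\<bar> \<ge> 1" by (cases "m < round x") auto
  then have "real_of_int 1 \<le> real_of_int \<bar>m - round x\<bar>" by (simp only: of_int_le_iff)
  then have "\<bar>of_int m - of_int (round x)\<bar> \<ge> (1::real)" by simp
  moreover have "\<bar>of_int m - of_int (round x)\<bar> \<le> \<bar>x - of_int (round x)\<bar> + \<bar>x - of_int m\<bar>"
    using abs_triangle_ineq[of "x - of_int (round x)" "of_int m - x"] by (simp add: abs_minus_commute)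
  moreover have "\<bar>x - of_int (round x)\<bar> \<le> 1/2" using of_int_round_abs_le[of x] by (simp add: abs_minus_commute)
  ultimately show ?thesis unfolding dist_int_def by linarith
qed

lemma dist_int_nonneg: "dist_int x \<ge> 0" by (simp add: dist_int_def)

lemma psi_set_ne: "t \<ge> 1 \<Longrightarrow> {dist_int (of_int q * \<alpha>) | q::int. 1 \<le> q \<and> real_of_int q \<le> t} \<noteq> {}"
  by auto

lemma psi_nonneg: "t \<ge> 1 \<Longrightarrow> psi \<alpha> t \<ge> 0"
  unfolding psi_def by (rule cInf_greatest[OF psi_set_ne]) (auto simp: dist_int_nonneg)

lemma psi_le: "1 \<le> q \<Longrightarrow> real_of_int q \<le> t \<Longrightarrow> psi \<alpha> t \<le> \<bar>of_int q * \<alpha> - of_int p\<bar>"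
  unfolding psi_def
  by (rule order_trans[OF cInf_lower dist_int_le]) (auto intro!: bdd_belowI[of _ 0] simp: dist_int_nonneg)

lemma u_sum: "u k + u (Suc k) \<le> 1"
proof -
  have "(of_int (QQ \<alpha> (Suc k)) - of_int (QQ \<alpha> k)) * (\<bar>dl \<alpha> k\<bar> - \<bar>dl \<alpha> (Suc k)\<bar>) \<ge> (0::real)"
    using QQ_incr[of k] dl_decr[of k] by (intro mult_nonneg_nonneg) auto
  then show ?thesis using key_id[of k] by (simp add: u_def algebra_simps)
qed

lemma lagrange_ge0: "lagrange \<alpha> \<ge> 0"
  unfolding lagrange_def
  by (rule Liminf_bounded) (auto intro!: exI[of _ 1] simp: eventually_at_top_linorder psi_nonneg)

lemma QQ_tendsto: "\<exists>K. \<forall>k\<ge>K. real_of_int (QQ \<alpha> k) \<ge> T"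
proof -
  obtain n :: nat where "real n \<ge> T" using real_arch_simple by blast
  then show ?thesis using QQ_big QQ_mono
    by (intro exI[of _ "Suc n"]) (metis Suc_le_D of_int_le_iff of_int_of_nat_eq order.trans)
qed

lemma lagrange_le: "lagrange \<alpha> \<le> ereal (1/2)"
  unfolding lagrange_def
proof (rule Liminf_least)
  fix P assume "eventually P (at_top :: real filter)"
  then obtain T where T: "\<And>t. t \<ge> T \<Longrightarrow> P t" by (auto simp: eventually_at_top_linorder)
  obtain K where K: "\<forall>k\<ge>K. real_of_int (QQ \<alpha> k) \<ge> max T 1" using QQ_tendsto by blast
  obtain k where k: "k \<in> {Suc K, Suc (Suc K)}" "u k \<le> 1/2"
  proof (cases "u (Suc K) \<le> 1/2")
    case True then show ?thesis using that by blast
  next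
    case False then show ?thesis by (intro that[of "Suc (Suc K)"]) (use u_sum[of "Suc K"] in auto)
  qed
  define t where "t = real_of_int (QQ \<alpha> k)"
  have kK: "k \<ge> K" "k \<ge> 1" using k by auto
  have t1: "t \<ge> 1" "P t" using K kK T unfolding t_def by auto
  have "psi \<alpha> t \<le> \<bar>of_int (QQ \<alpha> k) * \<alpha> - of_int (PP \<alpha> k)\<bar>"
    by (rule psi_le) (use QQ_ge1 kK in \<open>auto simp: t_def\<close>)
  then have "t * psi \<alpha> t \<le> u k"
    using t1 by (auto simp: u_def dl_def t_def intro!: mult_left_mono)
  then have "ereal (t * psi \<alpha> t) \<le> ereal (1/2)" using k by simp
  moreover have "t \<in> Collect P" using t1 by simp
  ultimately show "(INF x\<in>Collect P. ereal (x * psi \<alpha> x)) \<le> ereal (1/2)"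
    by (meson INF_lower2)
qed

lemma u_eventually:
  assumes "ereal c < lagrange \<alpha>"
  shows "\<exists>K. \<forall>k\<ge>K. u k > c"
proof -
  have "eventually (\<lambda>t. ereal c < ereal (t * psi \<alpha> t)) at_top"
    using less_LiminfD[OF assms[unfolded lagrange_def]] by simp
  then obtain T where T: "\<And>t. t \<ge> T \<Longrightarrow> c < t * psi \<alpha> t" by (auto simp: eventually_at_top_linorder)
  obtain K where K: "\<forall>k\<ge>K. real_of_int (QQ \<alpha> k) \<ge> max T 1" using QQ_tendsto by blast
  show ?thesis
  proof (intro exI allI impI)
    fix k assume kK: "k \<ge> K"
    define t where "t = real_of_int (QQ \<alpha> k)"
    have t1: "t \<ge> 1" "t \<ge> T" using K kK unfolding t_def by auto
    have k1: "k \<ge> 1" using t1 QQ_01 by (cases k) (auto simp: t_def)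
    have "psi \<alpha> t \<le> \<bar>of_int (QQ \<alpha> k) * \<alpha> - of_int (PP \<alpha> k)\<bar>"
      by (rule psi_le) (use QQ_ge1 k1 in \<open>auto simp: t_def\<close>)
    then have "t * psi \<alpha> t \<le> u k"
      using t1 by (auto simp: u_def dl_def t_def intro!: mult_left_mono)
    then show "u k > c" using T[OF t1(2)] by simp
  qed
qed

end


lemma cf_pq: "cf_p x n = PP x (Suc n)" "cf_q x n = QQ x (Suc n)"
  by (simp_all add: PP_def QQ_def)

context cf begin

lemma conv_close: "k \<ge> 1 \<Longrightarrow> \<bar>\<alpha> - of_int (PP \<alpha> k) / of_int (QQ \<alpha> k)\<bar> \<le> 1"
proof -
  assume k: "k \<ge> 1"
  have Q: "real_of_int (QQ \<alpha> k) \<ge> 1" using QQ_ge1[OF k] by simp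
  have "\<bar>dl \<alpha> k\<bar> = of_int (QQ \<alpha> k) * \<bar>\<alpha> - of_int (PP \<alpha> k) / of_int (QQ \<alpha> k)\<bar>"
  proof -
    have "dl \<alpha> k = of_int (QQ \<alpha> k) * (\<alpha> - of_int (PP \<alpha> k) / of_int (QQ \<alpha> k))"
      using Q by (simp add: dl_def field_simps)
    then show ?thesis using Q by (simp add: abs_mult)
  qed
  then have "of_int (QQ \<alpha> k) * \<bar>\<alpha> - of_int (PP \<alpha> k) / of_int (QQ \<alpha> k)\<bar> \<le> 1"
    using dl_le1[of k] by simp
  moreover have "\<bar>\<alpha> - of_int (PP \<alpha> k) / of_int (QQ \<alpha> k)\<bar>
      \<le> of_int (QQ \<alpha> k) * \<bar>\<alpha> - of_int (PP \<alpha> k) / of_int (QQ \<alpha> k)\<bar>"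
    using Q mult_right_mono[of 1 "of_int (QQ \<alpha> k)" "\<bar>\<alpha> - of_int (PP \<alpha> k) / of_int (QQ \<alpha> k)\<bar>"] by simp
  ultimately show ?thesis by linarith
qed

definition p0 :: int where "p0 = \<lfloor>\<alpha>\<rfloor> + 3"

lemma p0_star: "\<forall>n. real_of_int p0 / real_of_int 1 \<noteq> real_of_int (cf_p \<alpha> n) / real_of_int (cf_q \<alpha> n)"
proof (intro allI notI)
  fix n assume h: "real_of_int p0 / real_of_int 1 = real_of_int (cf_p \<alpha> n) / real_of_int (cf_q \<alpha> n)"
  have "\<bar>\<alpha> - of_int (PP \<alpha> (Suc n)) / of_int (QQ \<alpha> (Suc n))\<bar> \<le> 1" by (rule conv_close) simp
  then have "\<bar>\<alpha> - of_int p0\<bar> \<le> 1" using h by (simp add: cf_pq)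
  moreover have "of_int p0 \<ge> \<alpha> + 2"
  proof -
    have "\<alpha> < of_int \<lfloor>\<alpha>\<rfloor> + 1" by (rule real_of_int_floor_add_one_gt)
    moreover have "real_of_int p0 = of_int \<lfloor>\<alpha>\<rfloor> + 3" by (simp add: p0_def)
    ultimately show ?thesis by linarith
  qed
  ultimately show False by linarith
qed

abbreviation "S2 t \<equiv> {\<bar>of_int q * \<alpha> - of_int p\<bar> | p q::int.
      1 \<le> q \<and> real_of_int q \<le> t \<and> (\<forall>n. (p, q) \<noteq> (cf_p \<alpha> n, cf_q \<alpha> n))}"
abbreviation "S2s t \<equiv> {\<bar>of_int q * \<alpha> - of_int p\<bar> | p q::int.
      1 \<le> q \<and> real_of_int q \<le> t \<and>
      (\<forall>n. real_of_int p / real_of_int q \<noteq> real_of_int (cf_p \<alpha> n) / real_of_int (cf_q \<alpha> n))}"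

lemma S2s_ne: "t \<ge> 1 \<Longrightarrow> S2s t \<noteq> {}"
proof -
  assume t: "t \<ge> 1"
  have "\<bar>of_int 1 * \<alpha> - of_int p0\<bar> \<in> S2s t"
    using p0_star t by (intro CollectI exI[of _ p0] exI[of _ 1]) simp
  then show ?thesis by blast
qed

lemma S2s_sub: "S2s t \<subseteq> S2 t"
proof
  fix e assume "e \<in> S2s t"
  then obtain p q :: int where e: "e = \<bar>of_int q * \<alpha> - of_int p\<bar>" and h: "1 \<le> q" "real_of_int q \<le> t"
    and nc: "\<forall>n. real_of_int p / real_of_int q \<noteq> real_of_int (cf_p \<alpha> n) / real_of_int (cf_q \<alpha> n)"
    by blast
  have "\<forall>n. (p, q) \<noteq> (cf_p \<alpha> n, cf_q \<alpha> n)"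
  proof (intro allI notI)
    fix n assume "(p, q) = (cf_p \<alpha> n, cf_q \<alpha> n)"
    then have "p = cf_p \<alpha> n" "q = cf_q \<alpha> n" by simp_all
    then show False using nc by blast
  qed
  then show "e \<in> S2 t" using e h by blast
qed

lemma S2_bdd: "bdd_below (S2 t)"
proof (rule bdd_belowI)
  fix x assume "x \<in> S2 t"
  then obtain p q :: int where "x = \<bar>of_int q * \<alpha> - of_int p\<bar>" by blast
  then show "0 \<le> x" by simp
qed

lemma psi2_le_star: "t \<ge> 1 \<Longrightarrow> psi2 \<alpha> t \<le> psi2star \<alpha> t"
  unfolding psi2_def psi2star_def by (rule cInf_superset_mono[OF S2s_ne S2_bdd S2s_sub])

lemma kfrak_le_star: "kfrak \<alpha> \<le> kfrak_star \<alpha>"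
  unfolding kfrak_def kfrak_star_def
proof (rule Liminf_mono)
  have "\<forall>t\<ge>1. ereal (t * psi2 \<alpha> t) \<le> ereal (t * psi2star \<alpha> t)"
  proof (intro allI impI)
    fix t :: real assume t: "t \<ge> 1"
    then have "t * psi2 \<alpha> t \<le> t * psi2star \<alpha> t" using psi2_le_star[OF t] by (intro mult_left_mono) auto
    then show "ereal (t * psi2 \<alpha> t) \<le> ereal (t * psi2star \<alpha> t)" by simp
  qed
  then show "\<forall>\<^sub>F t in at_top. ereal (t * psi2 \<alpha> t) \<le> ereal (t * psi2star \<alpha> t)"
    unfolding eventually_at_top_linorder by blast
qed

lemma S2_ne: "t \<ge> 1 \<Longrightarrow> S2 t \<noteq> {}"
proof
  assume t: "t \<ge> 1" and e: "S2 t = {}"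
  have "S2s t \<subseteq> {}" using S2s_sub[of t] unfolding e .
  then show False using S2s_ne[OF t] by (simp only: subset_empty)
qed

lemma kfrak_ge: "kfrak \<alpha> \<ge> 2 * lagrange \<alpha>"
proof -
  obtain l where l: "lagrange \<alpha> = ereal l" "0 \<le> l" "l \<le> 1/2"
    using lagrange_ge0 lagrange_le by (cases "lagrange \<alpha>") auto
  show ?thesis
    unfolding kfrak_def le_Liminf_iff
  proof (intro allI impI)
    fix y assume "y < 2 * lagrange \<alpha>"
    then have "y < ereal (2 * l)" using l by simp
    then obtain z where z: "y < ereal z" "z < 2 * l" using ereal_dense2 by force
    define c where "c = z / 2"
    have "ereal c < lagrange \<alpha>" using z l by (simp add: c_def)
    then obtain K where K: "\<And>k. k \<ge> K \<Longrightarrow> u k > c" using u_eventually by blast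
    define \<delta> where "\<delta> = \<bar>dl \<alpha> (Suc K)\<bar>"
    have \<delta>p: "\<delta> > 0" using dl_pos \<delta>_def by simp
    define T where "T = max 1 (2 * \<bar>c\<bar> / \<delta> + 1)"
    have "\<forall>t\<ge>T. ereal z \<le> ereal (t * psi2 \<alpha> t)"
    proof (intro allI impI)
      fix t assume tT: "t \<ge> T"
      have t1: "t \<ge> 1" using tT by (simp add: T_def)
      have tpos: "t > 0" using t1 by simp
      have "z / t \<le> psi2 \<alpha> t"
        unfolding psi2_def
      proof (rule cInf_greatest[OF S2_ne[OF t1]])
        fix e assume "e \<in> S2 t"
        then obtain p q :: int where e: "e = \<bar>of_int q * \<alpha> - of_int p\<bar>" and q1: "1 \<le> q"
          and qt: "real_of_int q \<le> t" and nc: "\<forall>n. (p, q) \<noteq> (cf_p \<alpha> n, cf_q \<alpha> n)" by blast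
        obtain k where k: "k \<ge> 1" "QQ \<alpha> k \<le> q" "q < QQ \<alpha> (Suc k)"
          using locate[OF q1] by blast
        have e0: "e \<ge> 0" using e by simp
        have "t * e \<ge> z"
        proof (cases "k \<ge> Suc K")
          case True
          have ne1: "(p, q) \<noteq> (PP \<alpha> k, QQ \<alpha> k)"
            using nc[rule_format, of "k - 1"] k(1) by (simp add: cf_pq)
          have ne2: "(p, q) \<noteq> (PP \<alpha> (k - 1), QQ \<alpha> (k - 1))"
          proof (cases "k - 1 = 0")
            case True then show ?thesis using q1 by (auto simp: QQ_01)
          next
            case False then show ?thesis
              using nc[rule_format, of "k - 2"] by (simp add: cf_pq Suc_diff_Suc numeral_2_eq_2)
          qed
          have uc: "u (k - 1) > c" "u k > c" "u (Suc k) > c" using K True by auto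
          have "of_int q * e \<ge> 1 \<or> of_int q * e \<ge> 2 * min (u (k - 1)) (min (u k) (u (Suc k)))"
            using main_cases[OF k, of p] ne1 ne2 e by blast
          moreover have "2 * min (u (k - 1)) (min (u k) (u (Suc k))) > z" using uc by (simp add: c_def)
          moreover have "(1::real) > z" using z l by simp
          ultimately have "of_int q * e > z" by linarith
          moreover have "t * e \<ge> of_int q * e" using qt e0 by (intro mult_right_mono) auto
          ultimately show ?thesis by linarith
        next
          case False
          have "e \<ge> \<bar>dl \<alpha> k\<bar>" using main_cases[OF k, of p] e by blast
          moreover have "\<bar>dl \<alpha> k\<bar> \<ge> \<delta>" unfolding \<delta>_def using False by (intro dl_mono) simp
          ultimately have ed: "e \<ge> \<delta>" by simp
          have "t * e \<ge> T * \<delta>" using tT ed \<delta>p t1 by (intro mult_mono) (auto simp: T_def)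
          moreover have "T * \<delta> \<ge> (2 * \<bar>c\<bar> / \<delta> + 1) * \<delta>" using \<delta>p by (intro mult_right_mono) (auto simp: T_def)
          moreover have "(2 * \<bar>c\<bar> / \<delta> + 1) * \<delta> = 2 * \<bar>c\<bar> + \<delta>" using \<delta>p by (simp add: field_simps)
          moreover have "z \<le> 2 * \<bar>c\<bar>" by (simp add: c_def)
          ultimately show ?thesis using \<delta>p by linarith
        qed
        then show "z / t \<le> e" using tpos by (simp add: divide_le_eq mult.commute)
      qed
      then have "z \<le> t * psi2 \<alpha> t" using tpos by (simp add: divide_le_eq mult.commute)
      then show "ereal z \<le> ereal (t * psi2 \<alpha> t)" by simp
    qed
    then show "eventually (\<lambda>t. y < ereal (t * psi2 \<alpha> t)) at_top"
      unfolding eventually_at_top_linorder using z(1) by (meson less_le_trans)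
  qed
qed

end


lemma no_sol_nat: "(p::nat)^2 = 2 * q^2 \<Longrightarrow> q = 0"
proof (induction q arbitrary: p rule: less_induct)
  case (less q)
  have "even (p^2)" using less.prems by simp
  then have "even p" by simp
  then obtain p' where p': "p = 2 * p'" by blast
  then have "2 * p'^2 = q^2" using less.prems by (simp add: power_mult_distrib)
  then have "q^2 = 2 * p'^2" by simp
  then have "even (q^2)" by simp
  then have "even q" by simp
  then obtain q' where q': "q = 2 * q'" by blast
  have h: "p'^2 = 2 * q'^2" using \<open>2 * p'^2 = q^2\<close> q' by (simp add: power_mult_distrib)
  show ?case
  proof (rule ccontr)
    assume "q \<noteq> 0"
    then have "q' < q" using q' by simp
    then have "q' = 0" using less.IH h by blast
    then show False using q' \<open>q \<noteq> 0\<close> by simp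
  qed
qed

lemma no_sol_int: "(P::int)^2 = 2 * Q^2 \<Longrightarrow> Q = 0"
proof -
  assume h: "P^2 = 2 * Q^2"
  have "(nat \<bar>P\<bar>)^2 = 2 * (nat \<bar>Q\<bar>)^2"
  proof -
    have "int ((nat \<bar>P\<bar>)^2) = int (2 * (nat \<bar>Q\<bar>)^2)" using h by simp
    then show ?thesis by (simp only: of_nat_eq_iff)
  qed
  then have "nat \<bar>Q\<bar> = 0" by (rule no_sol_nat)
  then show "Q = 0" by simp
qed

abbreviation "s2 \<equiv> sqrt (2::real)"

lemma s2_sq: "s2 * s2 = 2" by simp
lemma s2_bounds: "s2 > 1" "s2 < 3/2"
proof -
  show "s2 > 1" by (simp add: real_less_rsqrt)
  have "sqrt 2 < sqrt ((3/2)^2)" by (intro real_sqrt_less_mono) (simp add: power2_eq_square)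
  then show "s2 < 3/2" by simp
qed

lemma s2_irr: "of_int Q * s2 = of_int P \<Longrightarrow> P = 0 \<and> Q = 0"
proof -
  assume h: "of_int Q * s2 = of_int P"
  then have "(of_int Q * s2)^2 = (of_int P :: real)^2" by simp
  then have "real_of_int (P^2) = real_of_int (2 * Q^2)" by (simp add: power_mult_distrib)
  then have "P^2 = 2 * Q^2" by (simp only: of_int_eq_iff)
  then have "Q = 0" by (rule no_sol_int)
  then show ?thesis using h by simp
qed

locale mob = cf +
  fixes A B C D :: int
  assumes det: "\<bar>A * D - B * C\<bar> = 1"
    and alpha_eq: "\<alpha> = (of_int A * s2 + of_int B) / (of_int C * s2 + of_int D)"
begin

definition "\<gamma>0 = of_int C * s2 + of_int D"
definition "\<delta> = A * D - B * C"

lemma \<delta>sq: "\<delta> * \<delta> = 1"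
proof -
  have "\<delta> = 1 \<or> \<delta> = -1" using det unfolding \<delta>_def by linarith
  then show ?thesis by auto
qed

lemma \<gamma>0_ne: "\<gamma>0 \<noteq> 0"
proof
  assume "\<gamma>0 = 0"
  then have "of_int C * s2 = of_int (- D)" by (simp add: \<gamma>0_def)
  then have "- D = 0 \<and> C = 0" by (rule s2_irr)
  then show False using det by simp
qed

lemma alpha_mul: "\<alpha> * \<gamma>0 = of_int A * s2 + of_int B"
proof -
  have "\<alpha> = (of_int A * s2 + of_int B) / \<gamma>0" unfolding \<gamma>0_def by (rule alpha_eq)
  then show ?thesis using \<gamma>0_ne by simp
qed

lemma fwd:
  fixes p q :: int
  defines "P \<equiv> p * D - q * B" and "Q \<equiv> q * A - p * C"
  shows "(of_int q * \<alpha> - of_int p) * \<gamma>0 = of_int Q * s2 - of_int P"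
    and "\<delta> * q = C * P + D * Q"
proof -
  have "(of_int q * \<alpha> - of_int p) * \<gamma>0 = of_int q * (\<alpha> * \<gamma>0) - of_int p * \<gamma>0" by (simp add: algebra_simps)
  also have "\<dots> = of_int Q * s2 - of_int P" by (simp only: alpha_mul) (simp add: \<gamma>0_def P_def Q_def algebra_simps)
  finally show "(of_int q * \<alpha> - of_int p) * \<gamma>0 = of_int Q * s2 - of_int P" .
  show "\<delta> * q = C * P + D * Q" by (simp add: \<delta>_def P_def Q_def algebra_simps)
qed

definition "\<kappa> = 2 * s2 * \<bar>of_int C\<bar> * \<bar>\<gamma>0\<bar> + \<bar>\<gamma>0\<bar>^2"

lemma kappa_ge0: "\<kappa> \<ge> 0" by (simp add: \<kappa>_def)

lemma lower_ineq:
  fixes p q :: int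
  assumes q1: "q \<ge> 1"
  shows "2 * s2 * of_int q * \<bar>of_int q * \<alpha> - of_int p\<bar> + \<kappa> * \<bar>of_int q * \<alpha> - of_int p\<bar>^2 \<ge> 1"
proof -
  define P where "P = p * D - q * B"
  define Q where "Q = q * A - p * C"
  define E where "E = \<bar>of_int q * \<alpha> - of_int p\<bar>"
  define \<eta> where "\<eta> = of_int Q * s2 - of_int P"
  define g where "g = \<bar>\<gamma>0\<bar>"
  have gp: "g > 0" using \<gamma>0_ne by (simp add: g_def)
  have f1: "(of_int q * \<alpha> - of_int p) * \<gamma>0 = \<eta>" using fwd(1)[of q p] by (simp add: \<eta>_def P_def Q_def)
  have f2: "\<delta> * q = C * P + D * Q" using fwd(2)[of q p] by (simp add: P_def Q_def)
  have eta_abs: "\<bar>\<eta>\<bar> = E * g" unfolding f1[symmetric] E_def g_def by (simp add: abs_mult)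
  have nz: "P^2 - 2 * Q^2 \<noteq> 0"
  proof
    assume "P^2 - 2 * Q^2 = 0"
    then have "Q = 0" using no_sol_int by simp
    moreover then have "P = 0" using \<open>P^2 - 2 * Q^2 = 0\<close> by simp
    ultimately have "\<delta> * q = 0" using f2 by simp
    then show False using \<delta>sq q1 by auto
  qed
  then have "1 \<le> \<bar>P^2 - 2 * Q^2\<bar>" by (cases "P^2 - 2 * Q^2 > 0") auto
  then have "real_of_int 1 \<le> real_of_int \<bar>P^2 - 2 * Q^2\<bar>" by (simp only: of_int_le_iff)
  then have one: "1 \<le> \<bar>real_of_int (P^2 - 2 * Q^2)\<bar>" by simp
  have fac: "real_of_int (P^2 - 2 * Q^2) = - \<eta> * (2 * of_int Q * s2 - \<eta>)"
    by (simp add: \<eta>_def algebra_simps power2_eq_square)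
  have Qg: "of_int Q * \<gamma>0 = of_int \<delta> * of_int q + of_int C * \<eta>"
  proof -
    have "real_of_int (\<delta> * q) = of_int (C * P + D * Q)" using f2 by simp
    then show ?thesis by (simp add: \<eta>_def \<gamma>0_def algebra_simps)
  qed
  have Qb: "\<bar>of_int Q\<bar> * g \<le> of_int q + \<bar>of_int C\<bar> * (E * g)"
  proof -
    have "\<bar>of_int Q\<bar> * g = \<bar>of_int \<delta> * of_int q + of_int C * \<eta>\<bar>" using Qg by (simp add: g_def abs_mult[symmetric])
    also have "\<dots> \<le> \<bar>of_int \<delta> * of_int q\<bar> + \<bar>of_int C * \<eta>\<bar>" by (rule abs_triangle_ineq)
    also have "\<bar>of_int \<delta> * of_int q\<bar> = (of_int q :: real)"
    proof -
      have "\<bar>\<delta>\<bar> = 1" using det by (simp add: \<delta>_def)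
      then show ?thesis using q1 by (simp add: abs_mult)
    qed
    finally show ?thesis by (simp add: abs_mult eta_abs)
  qed
  have "1 \<le> \<bar>\<eta>\<bar> * \<bar>2 * of_int Q * s2 - \<eta>\<bar>" using one fac by (simp add: abs_mult)
  also have "\<dots> \<le> \<bar>\<eta>\<bar> * (2 * s2 * \<bar>of_int Q\<bar> + \<bar>\<eta>\<bar>)"
  proof (rule mult_left_mono)
    have "\<bar>2 * of_int Q * s2 - \<eta>\<bar> \<le> \<bar>2 * of_int Q * s2\<bar> + \<bar>\<eta>\<bar>" by (rule abs_triangle_ineq4)
    then show "\<bar>2 * of_int Q * s2 - \<eta>\<bar> \<le> 2 * s2 * \<bar>of_int Q\<bar> + \<bar>\<eta>\<bar>" by (simp add: abs_mult mult_ac)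
  qed simp
  also have "\<dots> = E * (2 * s2 * (\<bar>of_int Q\<bar> * g)) + (E * g)^2"
    by (simp add: eta_abs power2_eq_square algebra_simps)
  also have "\<dots> \<le> E * (2 * s2 * (of_int q + \<bar>of_int C\<bar> * (E * g))) + (E * g)^2"
    using Qb by (intro add_right_mono mult_left_mono) (auto simp: E_def)
  also have "\<dots> = 2 * s2 * of_int q * E + \<kappa> * E^2"
    by (simp add: \<kappa>_def g_def power2_eq_square algebra_simps)
  finally show ?thesis by (simp add: E_def)
qed


lemma lagrange_ge_s: "lagrange \<alpha> \<ge> ereal (1 / (2 * s2))"
  unfolding lagrange_def le_Liminf_iff
proof (intro allI impI)
  fix y assume "y < ereal (1 / (2 * s2))"
  then obtain z where z: "y < ereal z" "z < 1 / (2 * s2)" using ereal_dense2 by force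
  have sp: "s2 > 0" using s2_bounds by simp
  define g where "g = 1 - 2 * s2 * z"
  have gp: "g > 0" using z sp by (simp add: g_def field_simps)
  define \<epsilon> where "\<epsilon> = min 1 (g / (\<kappa> + 1))"
  have ep: "\<epsilon> > 0" "\<epsilon> \<le> 1" using gp kappa_ge0 by (auto simp: \<epsilon>_def)
  have keps: "\<kappa> * \<epsilon>^2 \<le> g"
  proof -
    have "\<epsilon>^2 \<le> \<epsilon>" using ep by (simp add: power2_eq_square mult_le_cancel_right1)
    then have "\<kappa> * \<epsilon>^2 \<le> \<kappa> * \<epsilon>" using kappa_ge0 by (intro mult_left_mono) auto
    also have "\<kappa> * \<epsilon> \<le> \<kappa> * (g / (\<kappa> + 1))" using kappa_ge0 by (intro mult_left_mono) (auto simp: \<epsilon>_def)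
    also have "\<dots> \<le> g" using kappa_ge0 gp by (simp add: field_simps)
    finally show ?thesis .
  qed
  define T where "T = max 1 (\<bar>z\<bar> / \<epsilon> + 1)"
  have "\<forall>t\<ge>T. ereal z \<le> ereal (t * psi \<alpha> t)"
  proof (intro allI impI)
    fix t assume tT: "t \<ge> T"
    have t1: "t \<ge> 1" using tT by (simp add: T_def)
    have tpos: "t > 0" using t1 by simp
    have "z / t \<le> psi \<alpha> t"
      unfolding psi_def
    proof (rule cInf_greatest[OF psi_set_ne[OF t1]])
      fix d assume "d \<in> {dist_int (of_int q * \<alpha>) | q::int. 1 \<le> q \<and> real_of_int q \<le> t}"
      then obtain q :: int where d: "d = dist_int (of_int q * \<alpha>)" and q1: "1 \<le> q" and qt: "real_of_int q \<le> t"
        by blast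
      define p where "p = round (of_int q * \<alpha>)"
      have dE: "d = \<bar>of_int q * \<alpha> - of_int p\<bar>" by (simp add: d p_def dist_int_def)
      have d0: "d \<ge> 0" using dE by simp
      have "t * d \<ge> z"
      proof (cases "d \<ge> \<epsilon>")
        case True
        have "t * d \<ge> T * \<epsilon>" using tT True ep t1 by (intro mult_mono) (auto simp: T_def)
        moreover have "T * \<epsilon> \<ge> (\<bar>z\<bar> / \<epsilon> + 1) * \<epsilon>" using ep by (intro mult_right_mono) (auto simp: T_def)
        moreover have "(\<bar>z\<bar> / \<epsilon> + 1) * \<epsilon> = \<bar>z\<bar> + \<epsilon>" using ep by (simp add: field_simps)
        ultimately show ?thesis using ep by linarith
      next
        case False
        have li: "2 * s2 * of_int q * d + \<kappa> * d^2 \<ge> 1" unfolding dE by (rule lower_ineq[OF q1])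
        have "d^2 \<le> \<epsilon>^2" using False d0 by (intro power_mono) auto
        then have "\<kappa> * d^2 \<le> \<kappa> * \<epsilon>^2" using kappa_ge0 by (intro mult_left_mono) auto
        then have "2 * s2 * of_int q * d \<ge> 2 * s2 * z" using li keps unfolding g_def by linarith
        then have "(2 * s2) * (of_int q * d) \<ge> (2 * s2) * z" by (simp add: mult.assoc)
        moreover have "0 < 2 * s2" using sp by simp
        ultimately have "of_int q * d \<ge> z" by (rule mult_le_cancel_left_pos[THEN iffD1, rotated])
        moreover have "t * d \<ge> of_int q * d" using qt d0 by (intro mult_right_mono) auto
        ultimately show ?thesis by linarith
      qed
      then show "z / t \<le> d" using tpos by (simp add: divide_le_eq mult.commute)
    qed
    then have "z \<le> t * psi \<alpha> t" using tpos by (simp add: divide_le_eq mult.commute)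
    then show "ereal z \<le> ereal (t * psi \<alpha> t)" by simp
  qed
  then show "eventually (\<lambda>t. y < ereal (t * psi \<alpha> t)) at_top"
    unfolding eventually_at_top_linorder using z(1) by (meson less_le_trans)
qed

end


fun pell :: "nat \<Rightarrow> int \<times> int" where
  "pell 0 = (1, 0)"
| "pell (Suc n) = (fst (pell n) + 2 * snd (pell n), fst (pell n) + snd (pell n))"

definition "PL n = fst (pell n)"
definition "QL n = snd (pell n)"

lemma PL_Suc: "PL (Suc n) = PL n + 2 * QL n" and QL_Suc: "QL (Suc n) = PL n + QL n"
  by (simp_all add: PL_def QL_def)

lemma pell_pos: "PL n \<ge> 1 \<and> QL n \<ge> int n"
  by (induction n) (auto simp: PL_Suc QL_Suc, simp_all add: PL_def QL_def)

lemma QL_ge: "QL n \<ge> int n" using pell_pos by blast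
lemma QL_mono: "QL n \<le> QL (Suc n)" using pell_pos[of n] by (simp add: QL_Suc)

lemma pell_plus: "of_int (PL n) + of_int (QL n) * s2 = (1 + s2)^n"
proof (induction n)
  case 0 then show ?case by (simp add: PL_def QL_def)
next
  case (Suc n)
  have "of_int (PL (Suc n)) + of_int (QL (Suc n)) * s2 = (1 + s2) * (of_int (PL n) + of_int (QL n) * s2)"
    by (simp add: PL_Suc QL_Suc algebra_simps)
  then show ?case using Suc by simp
qed

lemma pell_minus: "of_int (PL n) - of_int (QL n) * s2 = (1 - s2)^n"
proof (induction n)
  case 0 then show ?case by (simp add: PL_def QL_def)
next
  case (Suc n)
  have "of_int (PL (Suc n)) - of_int (QL (Suc n)) * s2 = (1 - s2) * (of_int (PL n) - of_int (QL n) * s2)"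
    by (simp add: PL_Suc QL_Suc algebra_simps)
  then show ?case using Suc by simp
qed

lemma pell_det: "PL n * QL (Suc n) - QL n * PL (Suc n) = PL n ^ 2 - 2 * QL n ^ 2"
  by (simp add: PL_Suc QL_Suc power2_eq_square algebra_simps)

lemma pell_norm: "PL n ^ 2 - 2 * QL n ^ 2 = (-1) ^ n"
proof (induction n)
  case 0 then show ?case by (simp add: PL_def QL_def)
next
  case (Suc n)
  have "PL (Suc n) ^ 2 - 2 * QL (Suc n) ^ 2 = - (PL n ^ 2 - 2 * QL n ^ 2)"
    by (simp add: PL_Suc QL_Suc power2_eq_square algebra_simps)
  then show ?case using Suc by simp
qed

context cf begin

lemma not_conv_ratio:
  fixes p q p' q' :: int
  assumes q'1: "q' \<ge> 1" and qq: "q' < q" and EE: "\<bar>of_int q' * \<alpha> - of_int p'\<bar> < \<bar>of_int q * \<alpha> - of_int p\<bar>"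
    and dt: "\<bar>p * q' - q * p'\<bar> = 1"
  shows "\<forall>n. real_of_int p / real_of_int q \<noteq> real_of_int (cf_p \<alpha> n) / real_of_int (cf_q \<alpha> n)"
proof (intro allI notI)
  fix n
  assume h: "real_of_int p / real_of_int q = real_of_int (cf_p \<alpha> n) / real_of_int (cf_q \<alpha> n)"
  define k where "k = Suc n"
  have Qk: "QQ \<alpha> k \<ge> 1" using QQ_ge1 k_def by simp
  have qpos: "q > 0" using q'1 qq by simp
  have "real_of_int p / real_of_int q = real_of_int (PP \<alpha> k) / real_of_int (QQ \<alpha> k)"
    using h by (simp add: cf_pq k_def)
  then have "real_of_int (p * QQ \<alpha> k) = real_of_int (PP \<alpha> k * q)" using qpos Qk by (simp add: field_simps)
  then have cross: "p * QQ \<alpha> k = PP \<alpha> k * q" by (simp only: of_int_eq_iff)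
  define e where "e = p * q' - q * p'"
  have ee: "e * e = 1" using dt unfolding e_def by (cases "p * q' - q * p' \<ge> 0") (auto simp: abs_if, simp_all add: algebra_simps)
  define g where "g = e * (PP \<alpha> k * q' - QQ \<alpha> k * p')"
  have Qg: "QQ \<alpha> k = q * g"
  proof -
    have "QQ \<alpha> k * e = (p * QQ \<alpha> k) * q' - q * QQ \<alpha> k * p'" by (simp add: e_def algebra_simps)
    also have "\<dots> = q * (PP \<alpha> k * q' - QQ \<alpha> k * p')" unfolding cross by (simp add: algebra_simps)
    finally have "QQ \<alpha> k * e = q * (PP \<alpha> k * q' - QQ \<alpha> k * p')" .
    then have "QQ \<alpha> k * e * e = q * (PP \<alpha> k * q' - QQ \<alpha> k * p') * e" by (rule arg_cong[where f="\<lambda>z. z * e"])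
    then have "QQ \<alpha> k * e * e = q * g" unfolding g_def by (simp add: mult_ac)
    then show ?thesis using ee by (simp add: mult.assoc)
  qed
  have g1: "g \<ge> 1"
  proof (rule ccontr)
    assume "\<not> g \<ge> 1"
    then have "q * g \<le> 0" using qpos by (simp add: mult_nonneg_nonpos)
    then show False using Qg Qk by simp
  qed
  have Pg: "PP \<alpha> k = p * g"
  proof -
    have "p * (q * g) = PP \<alpha> k * q" using cross Qg by simp
    then have "q * (p * g) = q * PP \<alpha> k" by (simp add: algebra_simps)
    then show ?thesis using qpos by simp
  qed
  have "dl \<alpha> k = of_int g * (of_int q * \<alpha> - of_int p)" by (simp add: dl_def Qg Pg algebra_simps)
  then have "\<bar>dl \<alpha> k\<bar> = of_int g * \<bar>of_int q * \<alpha> - of_int p\<bar>" using g1 by (simp add: abs_mult)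
  moreover have "of_int g * \<bar>of_int q * \<alpha> - of_int p\<bar> \<ge> 1 * \<bar>of_int q * \<alpha> - of_int p\<bar>"
    using g1 by (intro mult_right_mono) auto
  ultimately have dk: "\<bar>dl \<alpha> k\<bar> \<ge> \<bar>of_int q * \<alpha> - of_int p\<bar>" by simp
  have "q \<le> QQ \<alpha> k" using Qg g1 qpos by (simp add: mult_le_cancel_left1 order_trans)
  then have "q' < QQ \<alpha> k" using qq by simp
  then have "\<bar>of_int q' * \<alpha> - of_int p'\<bar> \<ge> \<bar>dl \<alpha> (k - 1)\<bar>" by (rule best_approx[OF q'1])
  moreover have "\<bar>dl \<alpha> k\<bar> \<le> \<bar>dl \<alpha> (k - 1)\<bar>" by (intro dl_mono) simp
  ultimately show False using dk EE by linarith
qed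

end


context mob begin

definition "mp P Q = \<delta> * (A * P + B * Q)"
definition "mq P Q = \<delta> * (C * P + D * Q)"

lemma mp_inv: "mp P Q * D - mq P Q * B = P" "mq P Q * A - mp P Q * C = Q"
proof -
  have "mp P Q * D - mq P Q * B = \<delta> * \<delta> * P" by (simp add: mp_def mq_def \<delta>_def algebra_simps)
  then show "mp P Q * D - mq P Q * B = P" using \<delta>sq by simp
  have "mq P Q * A - mp P Q * C = \<delta> * \<delta> * Q" by (simp add: mp_def mq_def \<delta>_def algebra_simps)
  then show "mq P Q * A - mp P Q * C = Q" using \<delta>sq by simp
qed

lemma m_back: "(of_int (mq P Q) * \<alpha> - of_int (mp P Q)) * \<gamma>0 = of_int Q * s2 - of_int P"
  using fwd(1)[of "mq P Q" "mp P Q"] mp_inv[of P Q] by simp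

lemma abs_delta: "\<bar>\<delta>\<bar> = 1" using det by (simp add: \<delta>_def)

lemma mq_abs: "\<bar>real_of_int (mq P Q)\<bar> = \<bar>of_int Q * \<gamma>0 - of_int C * (of_int Q * s2 - of_int P)\<bar>"
proof -
  have "real_of_int (mq P Q) = of_int \<delta> * (of_int Q * \<gamma>0 - of_int C * (of_int Q * s2 - of_int P))"
    by (simp add: mq_def \<gamma>0_def algebra_simps)
  moreover have "\<bar>real_of_int \<delta>\<bar> = 1" using abs_delta by (simp flip: of_int_abs)
  ultimately show ?thesis by (simp add: abs_mult)
qed

lemma m_det: "mp P1 Q1 * mq P2 Q2 - mq P1 Q1 * mp P2 Q2 = \<delta> * (P1 * Q2 - Q1 * P2)"
proof -
  have "mp P1 Q1 * mq P2 Q2 - mq P1 Q1 * mp P2 Q2 = \<delta> * \<delta> * (\<delta> * (P1 * Q2 - Q1 * P2))"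
    by (simp add: mp_def mq_def \<delta>_def algebra_simps)
  then show ?thesis using \<delta>sq by simp
qed

definition "nq P Q = \<bar>mq P Q\<bar>"
definition "np P Q = (if mq P Q \<ge> 0 then mp P Q else - mp P Q)"

lemma n_E: "\<bar>of_int (nq P Q) * \<alpha> - of_int (np P Q)\<bar> = \<bar>of_int Q * s2 - of_int P\<bar> / \<bar>\<gamma>0\<bar>"
proof -
  have "\<bar>of_int (nq P Q) * \<alpha> - of_int (np P Q)\<bar> = \<bar>of_int (mq P Q) * \<alpha> - of_int (mp P Q)\<bar>"
  proof (cases "mq P Q \<ge> 0")
    case True then show ?thesis by (simp add: nq_def np_def)
  next
    case False
    then have "\<bar>of_int (nq P Q) * \<alpha> - of_int (np P Q)\<bar> = \<bar>- (of_int (mq P Q) * \<alpha> - of_int (mp P Q))\<bar>"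
      by (simp add: nq_def np_def)
    then show ?thesis by (simp only: abs_minus_cancel)
  qed
  moreover have "\<bar>of_int (mq P Q) * \<alpha> - of_int (mp P Q)\<bar> * \<bar>\<gamma>0\<bar> = \<bar>of_int Q * s2 - of_int P\<bar>"
    using m_back[of P Q] by (simp add: abs_mult[symmetric])
  ultimately show ?thesis using \<gamma>0_ne by (simp add: field_simps)
qed

lemma n_q: "real_of_int (nq P Q) = \<bar>of_int Q * \<gamma>0 - of_int C * (of_int Q * s2 - of_int P)\<bar>"
  using mq_abs[of P Q] by (simp add: nq_def)

lemma n_det: "\<bar>np P1 Q1 * nq P2 Q2 - nq P1 Q1 * np P2 Q2\<bar> = \<bar>P1 * Q2 - Q1 * P2\<bar>"
proof -
  have "\<bar>np P1 Q1 * nq P2 Q2 - nq P1 Q1 * np P2 Q2\<bar> = \<bar>mp P1 Q1 * mq P2 Q2 - mq P1 Q1 * mp P2 Q2\<bar>"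
    by (cases "mq P1 Q1 \<ge> 0"; cases "mq P2 Q2 \<ge> 0") (auto simp: np_def nq_def algebra_simps abs_minus_commute)
  also have "\<dots> = \<bar>P1 * Q2 - Q1 * P2\<bar>" using abs_delta by (simp add: m_det abs_mult)
  finally show ?thesis .
qed

end


lemma pell_eta: "of_int (QL m) * s2 - of_int (PL m) = -((1 - s2) ^ m)"
  using pell_minus[of m] by simp

lemma pell_2Q: "2 * (of_int (QL m) * s2) = (1 + s2) ^ m - (1 - s2) ^ m"
  using pell_plus[of m] pell_minus[of m] by linarith

context mob begin

lemma upper_witness:
  assumes w: "w > 1 / s2"
  shows "\<exists>p q::int. q \<ge> 1 \<and> real_of_int q \<ge> T \<and>
     (\<forall>n. real_of_int p / real_of_int q \<noteq> real_of_int (cf_p \<alpha> n) / real_of_int (cf_q \<alpha> n)) \<and>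
     of_int q * \<bar>of_int q * \<alpha> - of_int p\<bar> \<le> w"
proof -
  have sp: "s2 > 1" "s2 < 3/2" using s2_bounds by auto
  define g where "g = \<bar>\<gamma>0\<bar>"
  have gp: "g > 0" using \<gamma>0_ne by (simp add: g_def)
  define c where "c = \<bar>real_of_int C\<bar>"
  have c0: "c \<ge> 0" by (simp add: c_def)
  define y where "y = 1 - s2"
  have ay: "\<bar>y\<bar> = s2 - 1" using sp by (simp add: y_def)
  have ay1: "\<bar>y\<bar> < 1" "\<bar>y\<bar> > 0" using ay sp by auto
  have y1: "1 + y = 2 - s2" by (simp add: y_def)
  define K where "K = 1 / (2 * s2) + c / g + 1"
  have "1 / (2 * s2) > 0" using sp by simp
  moreover have "c / g \<ge> 0" using c0 gp by simp
  ultimately have Kp: "K > 0" unfolding K_def by linarith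
  define \<epsilon> where "\<epsilon> = (w - 1 / s2) / K"
  have ep: "\<epsilon> > 0" using w Kp by (simp add: \<epsilon>_def)
  obtain N2 where N2: "\<bar>y\<bar> ^ N2 < \<epsilon>" using real_arch_pow_inv[OF ep ay1(1)] by blast
  obtain N1 :: nat where N1: "real N1 > (2 * c + \<bar>T\<bar> + 1) / g" using reals_Archimedean2 by blast
  define n where "n = max N1 N2"
  have QLn: "real_of_int (QL n) * g > 2 * c + \<bar>T\<bar> + 1"
  proof -
    have "real_of_int (QL n) \<ge> real N1" using QL_ge[of n] by (simp add: n_def)
    then have "real_of_int (QL n) > (2 * c + \<bar>T\<bar> + 1) / g" using N1 by linarith
    then show ?thesis using gp by (simp add: divide_less_eq)
  qed
  define Y where "Y = y ^ n"
  have aY: "\<bar>Y\<bar> < \<epsilon>"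
  proof -
    have "\<bar>y\<bar> ^ n \<le> \<bar>y\<bar> ^ N2" using ay1 by (intro power_decreasing) (auto simp: n_def)
    then show ?thesis using N2 by (simp add: Y_def power_abs)
  qed
  have aY1: "\<bar>Y\<bar> \<le> 1" using ay1 by (simp add: Y_def power_abs power_le_one)
  have aYp: "\<bar>Y\<bar> > 0" using ay1 by (simp add: Y_def power_abs)
  have Y2: "Y^2 \<le> \<bar>Y\<bar>"
  proof -
    have "Y^2 = \<bar>Y\<bar> * \<bar>Y\<bar>" by (simp add: power2_eq_square)
    also have "\<dots> \<le> \<bar>Y\<bar> * 1" using aY1 by (intro mult_left_mono) auto
    finally show ?thesis by simp
  qed
  define X where "X = (1 + s2) ^ n"
  have XY: "X * Y = (-1) ^ n"
  proof -
    have "X * Y = ((1 + s2) * (1 - s2)) ^ n" by (simp add: X_def Y_def y_def power_mult_distrib)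
    also have "(1 + s2) * (1 - s2) = -1" by (simp add: algebra_simps)
    finally show ?thesis .
  qed
  define Ps where "Ps = PL n + PL (Suc n)"
  define Qs where "Qs = QL n + QL (Suc n)"
  define Pp where "Pp = PL (Suc n)"
  define Qp where "Qp = QL (Suc n)"
  define \<eta>s where "\<eta>s = of_int Qs * s2 - of_int Ps"
  define \<eta>p where "\<eta>p = of_int Qp * s2 - of_int Pp"
  have \<eta>s_eq: "\<eta>s = - Y * (1 + y)"
    using pell_eta[of n] pell_eta[of "Suc n"] by (simp add: \<eta>s_def Ps_def Qs_def Y_def y_def algebra_simps)
  have \<eta>p_eq: "\<eta>p = - Y * y"
    using pell_eta[of "Suc n"] by (simp add: \<eta>p_def Pp_def Qp_def Y_def y_def algebra_simps)
  have a\<eta>s: "\<bar>\<eta>s\<bar> = \<bar>Y\<bar> * (2 - s2)" using sp by (simp add: \<eta>s_eq y1 abs_mult)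
  have a\<eta>p: "\<bar>\<eta>p\<bar> = \<bar>Y\<bar> * (s2 - 1)" by (simp add: \<eta>p_eq abs_mult ay)
  have a\<eta>s1: "\<bar>\<eta>s\<bar> \<le> 1"
  proof -
    have "\<bar>Y\<bar> * (2 - s2) \<le> 1 * 1" using aY1 sp by (intro mult_mono) auto
    then show ?thesis using a\<eta>s by simp
  qed
  have a\<eta>p1: "\<bar>\<eta>p\<bar> \<le> 1"
  proof -
    have "\<bar>Y\<bar> * (s2 - 1) \<le> 1 * 1" using aY1 sp by (intro mult_mono) auto
    then show ?thesis using a\<eta>p by simp
  qed
  have \<eta>lt: "\<bar>\<eta>p\<bar> < \<bar>\<eta>s\<bar>" using aYp sp unfolding a\<eta>p a\<eta>s by (intro mult_strict_left_mono) auto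
  have Qs0: "Qs \<ge> 0" "Qp \<ge> 0" using pell_pos[of n] pell_pos[of "Suc n"] by (auto simp: Qs_def Qp_def)
  have QsQp: "real_of_int Qs = of_int Qp + of_int (QL n)" by (simp add: Qs_def Qp_def)
  have QpQL: "real_of_int Qp \<ge> of_int (QL n)" using QL_mono[of n] by (simp add: Qp_def)
  define ps where "ps = np Ps Qs"
  define qs where "qs = nq Ps Qs"
  define pp where "pp = np Pp Qp"
  define qp where "qp = nq Pp Qp"
  have Es: "\<bar>of_int qs * \<alpha> - of_int ps\<bar> = \<bar>\<eta>s\<bar> / g"
    using n_E[of Ps Qs] by (simp add: qs_def ps_def \<eta>s_def g_def)
  have Ep: "\<bar>of_int qp * \<alpha> - of_int pp\<bar> = \<bar>\<eta>p\<bar> / g"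
    using n_E[of Pp Qp] by (simp add: qp_def pp_def \<eta>p_def g_def)
  have qs_eq: "real_of_int qs = \<bar>of_int Qs * \<gamma>0 - of_int C * \<eta>s\<bar>"
    using n_q[of Ps Qs] by (simp add: qs_def \<eta>s_def)
  have qp_eq: "real_of_int qp = \<bar>of_int Qp * \<gamma>0 - of_int C * \<eta>p\<bar>"
    using n_q[of Pp Qp] by (simp add: qp_def \<eta>p_def)
  have qs_lo: "real_of_int qs \<ge> of_int Qs * g - c * \<bar>\<eta>s\<bar>"
  proof -
    have "\<bar>of_int Qs * \<gamma>0\<bar> - \<bar>of_int C * \<eta>s\<bar> \<le> \<bar>of_int Qs * \<gamma>0 - of_int C * \<eta>s\<bar>" by (rule abs_triangle_ineq2)
    then show ?thesis using qs_eq Qs0 by (simp add: abs_mult c_def g_def)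
  qed
  have qs_hi: "real_of_int qs \<le> of_int Qs * g + c * \<bar>\<eta>s\<bar>"
  proof -
    have "\<bar>of_int Qs * \<gamma>0 - of_int C * \<eta>s\<bar> \<le> \<bar>of_int Qs * \<gamma>0\<bar> + \<bar>of_int C * \<eta>s\<bar>" by (rule abs_triangle_ineq4)
    then show ?thesis using qs_eq Qs0 by (simp add: abs_mult c_def g_def)
  qed
  have qp_lo: "real_of_int qp \<ge> of_int Qp * g - c * \<bar>\<eta>p\<bar>"
  proof -
    have "\<bar>of_int Qp * \<gamma>0\<bar> - \<bar>of_int C * \<eta>p\<bar> \<le> \<bar>of_int Qp * \<gamma>0 - of_int C * \<eta>p\<bar>" by (rule abs_triangle_ineq2)
    then show ?thesis using qp_eq Qs0 by (simp add: abs_mult c_def g_def)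
  qed
  have qp_hi: "real_of_int qp \<le> of_int Qp * g + c * \<bar>\<eta>p\<bar>"
  proof -
    have "\<bar>of_int Qp * \<gamma>0 - of_int C * \<eta>p\<bar> \<le> \<bar>of_int Qp * \<gamma>0\<bar> + \<bar>of_int C * \<eta>p\<bar>" by (rule abs_triangle_ineq4)
    then show ?thesis using qp_eq Qs0 by (simp add: abs_mult c_def g_def)
  qed
  have c\<eta>s: "c * \<bar>\<eta>s\<bar> \<le> c" using c0 a\<eta>s1 by (simp add: mult_left_le)
  have c\<eta>p: "c * \<bar>\<eta>p\<bar> \<le> c" using c0 a\<eta>p1 by (simp add: mult_left_le)
  have QLg: "real_of_int (QL n) * g \<le> of_int Qp * g" using QpQL gp by (intro mult_right_mono) auto
  have QsQp_g: "of_int Qs * g = of_int Qp * g + of_int (QL n) * g" using QsQp by (simp add: algebra_simps)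
  have qp_pos: "real_of_int qp > 0" using qp_lo c\<eta>p QLg QLn c0 by linarith
  then have qp1: "qp \<ge> 1" by simp
  have qlt: "real_of_int qp < of_int qs" using qs_lo qp_hi c\<eta>s c\<eta>p QsQp_g QLn c0 by linarith
  then have qlt': "qp < qs" by simp
  have qsT: "real_of_int qs \<ge> T" using qs_lo c\<eta>s QsQp_g QLg QLn c0 by linarith
  have qs1: "qs \<ge> 1" using qp1 qlt' by simp
  have EE: "\<bar>of_int qp * \<alpha> - of_int pp\<bar> < \<bar>of_int qs * \<alpha> - of_int ps\<bar>"
    unfolding Es Ep using \<eta>lt gp by (simp add: divide_strict_right_mono)
  have dt: "\<bar>ps * qp - qs * pp\<bar> = 1"
  proof -
    have "\<bar>ps * qp - qs * pp\<bar> = \<bar>Ps * Qp - Qs * Pp\<bar>" unfolding ps_def qp_def qs_def pp_def by (rule n_det)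
    also have "Ps * Qp - Qs * Pp = PL n * QL (Suc n) - QL n * PL (Suc n)"
      by (simp add: Ps_def Qp_def Qs_def Pp_def algebra_simps)
    also have "\<dots> = (-1) ^ n" by (simp add: pell_det pell_norm)
    finally show ?thesis by simp
  qed
  have nc: "\<forall>n. real_of_int ps / real_of_int qs \<noteq> real_of_int (cf_p \<alpha> n) / real_of_int (cf_q \<alpha> n)"
    by (rule not_conv_ratio[OF qp1 qlt' EE dt])
  have bound: "of_int qs * \<bar>of_int qs * \<alpha> - of_int ps\<bar> \<le> w"
  proof -
    have QsEta: "2 * s2 * (of_int Qs * \<eta>s) = - 2 * (X * Y) + Y^2 * (1 + y)^2"
    proof -
      have "2 * s2 * of_int Qs = X * (2 + s2) - Y * (1 + y)"
        using pell_2Q[of n] pell_2Q[of "Suc n"] by (simp add: Qs_def X_def Y_def y_def algebra_simps)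
      then have "2 * s2 * (of_int Qs * \<eta>s) = (X * (2 + s2) - Y * (1 + y)) * (- Y * (1 + y))"
        by (simp add: \<eta>s_eq mult.assoc[symmetric])
      also have "\<dots> = - (X * Y) * ((2 + s2) * (2 - s2)) + Y^2 * (1 + y)^2"
        by (simp add: y1 power2_eq_square algebra_simps)
      also have "(2 + s2) * (2 - s2) = 2" by (simp add: algebra_simps)
      finally show ?thesis by simp
    qed
    have y1sq: "(1 + y)^2 \<le> 1" using sp by (simp add: y1 power_le_one)
    have "\<bar>2 * s2 * (of_int Qs * \<eta>s)\<bar> \<le> 2 * \<bar>X * Y\<bar> + Y^2 * (1 + y)^2"
      unfolding QsEta by (rule order_trans[OF abs_triangle_ineq]) (simp add: abs_mult)
    also have "\<dots> \<le> 2 + Y^2" using y1sq XY by (simp add: mult_left_le)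
    finally have "2 * s2 * \<bar>of_int Qs * \<eta>s\<bar> \<le> 2 + Y^2" using sp by (simp add: abs_mult)
    then have QE1: "of_int Qs * \<bar>\<eta>s\<bar> \<le> 1 / s2 + Y^2 / (2 * s2)"
      using sp Qs0 by (simp add: abs_mult field_simps)
    have es2: "\<eta>s^2 \<le> Y^2"
    proof -
      have "\<eta>s^2 = Y^2 * (1 + y)^2" by (simp add: \<eta>s_eq power_mult_distrib)
      also have "\<dots> \<le> Y^2 * 1" using y1sq by (intro mult_left_mono) auto
      finally show ?thesis by simp
    qed
    have "of_int qs * \<bar>of_int qs * \<alpha> - of_int ps\<bar> \<le> (of_int Qs * g + c * \<bar>\<eta>s\<bar>) * (\<bar>\<eta>s\<bar> / g)"
      unfolding Es using qs_hi gp by (intro mult_right_mono) auto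
    also have "\<dots> = of_int Qs * \<bar>\<eta>s\<bar> + c / g * \<eta>s^2" using gp by (simp add: field_simps power2_eq_square)
    also have "\<dots> \<le> 1 / s2 + Y^2 / (2 * s2) + c / g * Y^2"
      using QE1 es2 c0 gp by (intro add_mono mult_left_mono) auto
    also have "\<dots> = 1 / s2 + Y^2 * (1 / (2 * s2) + c / g)" by (simp add: algebra_simps)
    also have "\<dots> \<le> 1 / s2 + \<epsilon> * K"
    proof -
      have "Y^2 \<le> \<epsilon>" using Y2 aY by simp
      moreover have "1 / (2 * s2) + c / g \<le> K" by (simp add: K_def)
      moreover have "1 / (2 * s2) + c / g \<ge> 0" using sp c0 gp by simp
      ultimately have "Y^2 * (1 / (2 * s2) + c / g) \<le> \<epsilon> * K" using ep by (intro mult_mono) auto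
      then show ?thesis by simp
    qed
    also have "\<dots> = w" using Kp by (simp add: \<epsilon>_def)
    finally show ?thesis .
  qed
  show ?thesis using qs1 qsT nc bound by blast
qed

end


context mob begin

lemma S2s_bdd: "bdd_below (S2s t)"
proof (rule bdd_belowI)
  fix x assume "x \<in> S2s t"
  then obtain p q :: int where "x = \<bar>of_int q * \<alpha> - of_int p\<bar>" by blast
  then show "0 \<le> x" by simp
qed

lemma kstar_le_w:
  assumes w: "w > 1 / s2"
  shows "kfrak_star \<alpha> \<le> ereal w"
  unfolding kfrak_star_def
proof (rule Liminf_least)
  fix P assume "eventually P (at_top :: real filter)"
  then obtain T where T: "\<And>t. t \<ge> T \<Longrightarrow> P t" by (auto simp: eventually_at_top_linorder)
  obtain p q :: int where q1: "q \<ge> 1" and qT: "real_of_int q \<ge> T"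
    and nc: "\<forall>n. real_of_int p / real_of_int q \<noteq> real_of_int (cf_p \<alpha> n) / real_of_int (cf_q \<alpha> n)"
    and b: "of_int q * \<bar>of_int q * \<alpha> - of_int p\<bar> \<le> w"
    using upper_witness[OF w, of T] by blast
  define t where "t = real_of_int q"
  have Pt: "P t" using T qT by (simp add: t_def)
  have mem: "\<bar>of_int q * \<alpha> - of_int p\<bar> \<in> S2s t" using q1 nc by (auto simp: t_def)
  have "psi2star \<alpha> t \<le> \<bar>of_int q * \<alpha> - of_int p\<bar>"
    unfolding psi2star_def by (rule cInf_lower[OF mem S2s_bdd])
  then have "t * psi2star \<alpha> t \<le> w" using b q1 unfolding t_def
    by (meson mult_left_mono of_int_0_le_iff order.trans zero_le_one)
  then have "ereal (t * psi2star \<alpha> t) \<le> ereal w" by simp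
  then show "(INF x\<in>Collect P. ereal (x * psi2star \<alpha> x)) \<le> ereal w"
    using Pt by (meson INF_lower2 mem_Collect_eq)
qed

lemma kstar_le: "kfrak_star \<alpha> \<le> ereal (1 / s2)"
proof (rule dense_ge)
  fix x assume "ereal (1 / s2) < x"
  then obtain w where w: "ereal (1 / s2) < ereal w" "ereal w < x" using ereal_dense2 by blast
  then have "kfrak_star \<alpha> \<le> ereal w" by (intro kstar_le_w) simp
  then show "kfrak_star \<alpha> \<le> x" using w(2) by simp
qed

lemma sqrt2_case: "kfrak_star \<alpha> = kfrak \<alpha> \<and> kfrak \<alpha> = 2 * lagrange \<alpha>"
proof -
  have "2 * lagrange \<alpha> \<ge> 2 * ereal (1 / (2 * s2))"
    using lagrange_ge_s by (intro ereal_mult_left_mono) auto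
  moreover have "2 * ereal (1 / (2 * s2)) = ereal (1 / s2)" by simp
  ultimately have a: "2 * lagrange \<alpha> \<ge> ereal (1 / s2)" by simp
  have b: "kfrak \<alpha> \<ge> 2 * lagrange \<alpha>" by (rule kfrak_ge)
  have c: "kfrak \<alpha> \<le> kfrak_star \<alpha>" by (rule kfrak_le_star)
  have d: "kfrak_star \<alpha> \<le> ereal (1 / s2)" by (rule kstar_le)
  show ?thesis using a b c d by (meson antisym order.trans)
qed

end

theorem mainTheorem15:
  fixes \<alpha> :: real
  assumes "\<alpha> \<notin> \<rat>"
  shows "kfrak_star \<alpha> \<ge> kfrak \<alpha> \<and> kfrak \<alpha> \<ge> 2 * lagrange \<alpha> \<and>
         (moebius_equiv \<alpha> (sqrt 2) \<longrightarrow>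
            kfrak_star \<alpha> = kfrak \<alpha> \<and> kfrak \<alpha> = 2 * lagrange \<alpha>)"
proof -
  interpret cf \<alpha> by unfold_locales (rule assms)
  have 1: "kfrak_star \<alpha> \<ge> kfrak \<alpha>" by (rule kfrak_le_star)
  have 2: "kfrak \<alpha> \<ge> 2 * lagrange \<alpha>" by (rule kfrak_ge)
  have 3: "kfrak_star \<alpha> = kfrak \<alpha> \<and> kfrak \<alpha> = 2 * lagrange \<alpha>" if me: "moebius_equiv \<alpha> (sqrt 2)"
  proof -
    obtain a b c d :: int where h: "\<bar>a * d - b * c\<bar> = 1"
      "\<alpha> = (of_int a * sqrt 2 + of_int b) / (of_int c * sqrt 2 + of_int d)"
      using me unfolding moebius_equiv_def by blast
    interpret mob \<alpha> a b c d by unfold_locales (use h in auto)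
    show ?thesis by (rule sqrt2_case)
  qed
  show ?thesis using 1 2 3 by blast
qed


end
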